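(* Let $\mathcal{X}$ be an input set, $\mathcal{Y}$ an output set, and $\mathcal{F}$ a set of models $f:\mathcal{X}\to\mathcal{Y}$. Let $n,m\ge 1$. For $i=1,\dots,n$ let $t_i=(p_i,S_i,\ell_i)$ be a learning task, where $p_i$ is a probability distribution on $\mathcal{X}\times\mathcal{Y}$, $\ell_i:\mathcal{Y}\times\mathcal{Y}\to[0,1]$ is a loss function, and $S_i=\{(x_{i,1},y_{i,1}),\dots,(x_{i,m},y_{i,m})\}$ is a sample of size $m$ drawn i.i.d. from $p_i$, the samples $S_1,\dots,S_n$ being drawn independently of each other. Let $\mathcal{E}$ be a set (of "global parameters") and let $l:\mathcal{E}\to\mathbb{N}$ be the length function of a prefix-free encoding of $\mathcal{E}$ (the meta-encoder). For each $E\in\mathcal{E}$, let $l_E:\bigcup_{k=1}^\infty\mathcal{F}^k\to\mathbb{N}$ be the length function of a prefix-free encoding of $\bigcup_{k=1}^\infty\mathcal{F}^k$ (the multi-task encoder given $E$). Then for any $\delta>0$, with probability at least $1-\delta$ over the sampling of $S_1,\dots,S_n$, for all $E\in\mathcal{E}$ and all $f_1,\dots,f_n\in\mathcal{F}$: $$\mathrm{kl}\Big(\widehat{\mathcal{R}}(f_1,\dots,f_n)\,\Big|\,\mathcal{R}(f_1,\dots,f_n)\Big)\le\frac{\big(l(E)+l_E(f_1,\dots,f_n)\big)\log 2+\log\frac{2\sqrt{mn}}{\delta}}{mn}.$$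
   Context: A (prefix-free) encoding of a set $\mathcal{Z}$ is a map $C:\mathcal{Z}\to\{0,1\}^*$ such that for all $z\neq z'$ in $\mathcal{Z}$, $C(z)$ is not a prefix of $C(z')$; its length function is $z\mapsto$ length of $C(z)$. The multi-task risk is $\mathcal{R}(f_1,\dots,f_n)=\frac1n\sum_{i=1}^n \mathbb{E}_{(x,y)\sim p_i}\ell_i(y,f_i(x))$ and the multi-task empirical risk is $\widehat{\mathcal{R}}(f_1,\dots,f_n)=\frac{1}{mn}\sum_{i=1}^n\sum_{j=1}^m \ell_i(y_{i,j},f_i(x_{i,j}))$. For $q,p\in[0,1]$, $\mathrm{kl}(q|p)=q\log\frac{q}{p}+(1-q)\log\frac{1-q}{1-p}$ is the Kullback–Leibler divergence between Bernoulli distributions with means $q$ and $p$ (with the usual conventions $0\log 0=0$). *)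

theory Defs
  imports "HOL-Probability.Probability" "HOL-Library.Sublist"
begin

definition prefix_free_encoding :: "('z \<Rightarrow> bool list) \<Rightarrow> 'z set \<Rightarrow> bool" where
  "prefix_free_encoding C Z \<longleftrightarrow>
     (\<forall>z\<in>Z. \<forall>z'\<in>Z. z \<noteq> z' \<longrightarrow> \<not> prefix (C z) (C z'))"

definition is_prefix_code_length :: "('z \<Rightarrow> nat) \<Rightarrow> 'z set \<Rightarrow> bool" where
  "is_prefix_code_length L Z \<longleftrightarrow>
     (\<exists>C. prefix_free_encoding C Z \<and> (\<forall>z\<in>Z. L z = length (C z)))"

text \<open>The union over k >= 1 of F^k, tuples represented as nonempty lists.\<close>
definition tuples_of :: "'a set \<Rightarrow> 'a list set" where
  "tuples_of F = {fs. fs \<noteq> [] \<and> set fs \<subseteq> F}"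

definition sample_measure :: "nat \<Rightarrow> nat \<Rightarrow> (nat \<Rightarrow> 'a measure) \<Rightarrow> (nat \<times> nat \<Rightarrow> 'a) measure" where
  "sample_measure n m p = PiM ({..<n} \<times> {..<m}) (\<lambda>(i, j). p i)"

definition mt_emp_risk ::
  "nat \<Rightarrow> nat \<Rightarrow> (nat \<Rightarrow> 'y \<Rightarrow> 'y \<Rightarrow> real) \<Rightarrow> (nat \<times> nat \<Rightarrow> 'x \<times> 'y) \<Rightarrow> (nat \<Rightarrow> 'x \<Rightarrow> 'y) \<Rightarrow> real" where
  "mt_emp_risk n m loss S f =
     (1 / (real m * real n)) * (\<Sum>i<n. \<Sum>j<m. loss i (snd (S (i, j))) (f i (fst (S (i, j)))))"

definition mt_risk ::
  "nat \<Rightarrow> (nat \<Rightarrow> ('x \<times> 'y) measure) \<Rightarrow> (nat \<Rightarrow> 'y \<Rightarrow> 'y \<Rightarrow> real) \<Rightarrow> (nat \<Rightarrow> 'x \<Rightarrow> 'y) \<Rightarrow> real" where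
  "mt_risk n p loss f = (1 / real n) * (\<Sum>i<n. \<integral>z. loss i (snd z) (f i (fst z)) \<partial>(p i))"

text \<open>q log(q/p) with conventions 0 log 0 = 0 and q log(q/0) = +infinity for q > 0.\<close>
definition xlogxy :: "real \<Rightarrow> real \<Rightarrow> ereal" where
  "xlogxy q p = (if q = 0 then 0 else if p = 0 then \<infinity> else ereal (q * ln (q / p)))"

definition kl :: "real \<Rightarrow> real \<Rightarrow> ereal" where
  "kl q p = xlogxy q p + xlogxy (1 - q) (1 - p)"

end

theory Submission
  imports Defs "HOL-Real_Asymp.Real_Asymp"
begin


lemma card_bool_lists: "card {w::bool list. length w = k} = 2^k"
  using card_lists_length_eq[of "UNIV :: bool set" k] by (simp add: card_UNIV_bool)

lemma finite_bool_lists: "finite {w::bool list. length w = k}"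
  using finite_lists_length_eq[of "UNIV :: bool set" k] by simp

lemma kraft_finite:
  assumes pf: "prefix_free_encoding C Z" and fin: "finite S" and sub: "S \<subseteq> Z"
  shows "(\<Sum>z\<in>S. (1/2::real)^length (C z)) \<le> 1"
proof -
  define L where "L = Max (insert 0 (length ` C ` S))"
  have len: "length (C z) \<le> L" if "z \<in> S" for z
    unfolding L_def using fin that by (intro Max_ge) auto
  define Ext where "Ext z = {w::bool list. length w = L \<and> prefix (C z) w}" for z
  have ext_eq: "Ext z = (\<lambda>v. C z @ v) ` {v. length v = L - length (C z)}" if "z \<in> S" for z
  proof
    show "Ext z \<subseteq> (\<lambda>v. C z @ v) ` {v. length v = L - length (C z)}"
      by (auto simp: Ext_def prefix_def)
    show "(\<lambda>v. C z @ v) ` {v. length v = L - length (C z)} \<subseteq> Ext z"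
      using len[OF that] by (auto simp: Ext_def)
  qed
  have card_ext: "card (Ext z) = 2^(L - length (C z))" if "z \<in> S" for z
    unfolding ext_eq[OF that]
    by (subst card_image) (auto simp: inj_on_def card_bool_lists)
  have disj: "\<forall>z\<in>S. \<forall>z'\<in>S. z \<noteq> z' \<longrightarrow> Ext z \<inter> Ext z' = {}"
  proof (intro ballI impI)
    fix z z' assume z: "z \<in> S" "z' \<in> S" "z \<noteq> z'"
    show "Ext z \<inter> Ext z' = {}"
    proof (rule ccontr)
      assume "Ext z \<inter> Ext z' \<noteq> {}"
      then obtain w where "prefix (C z) w" "prefix (C z') w" by (auto simp: Ext_def)
      then have "prefix (C z) (C z') \<or> prefix (C z') (C z)" by (rule prefix_same_cases)
      moreover have "\<not> prefix (C z) (C z')" "\<not> prefix (C z') (C z)"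
        using pf z sub unfolding prefix_free_encoding_def by (metis subsetD)+
      ultimately show False by blast
    qed
  qed
  have "(\<Sum>z\<in>S. card (Ext z)) = card (\<Union>z\<in>S. Ext z)"
    by (rule card_UN_disjoint[symmetric]) (use fin disj in \<open>auto simp: Ext_def intro: finite_subset[OF _ finite_bool_lists]\<close>)
  also have "\<dots> \<le> card {w::bool list. length w = L}"
    by (rule card_mono[OF finite_bool_lists]) (auto simp: Ext_def)
  finally have "(\<Sum>z\<in>S. (2::nat)^(L - length (C z))) \<le> 2^L"
    using card_ext by (simp add: card_bool_lists)
  then have "(\<Sum>z\<in>S. (2::real)^(L - length (C z))) \<le> 2^L"
  proof -
    have "real (\<Sum>z\<in>S. (2::nat)^(L - length (C z))) \<le> real (2^L)"
      using \<open>(\<Sum>z\<in>S. (2::nat)^(L - length (C z))) \<le> 2^L\<close> by (simp only: of_nat_le_iff)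
    then show ?thesis by simp
  qed
  moreover have "(\<Sum>z\<in>S. (1/2::real)^length (C z)) = (\<Sum>z\<in>S. (2::real)^(L - length (C z))) / 2^L"
    unfolding sum_divide_distrib
  proof (rule sum.cong[OF refl])
    fix z assume "z \<in> S"
    then have "L = (L - length (C z)) + length (C z)" using len by simp
    then have "(2::real)^L = 2^(L - length (C z)) * 2^length (C z)" by (metis power_add)
    then show "(1/2::real)^length (C z) = 2^(L - length (C z)) / 2^L"
      by (simp add: power_one_over)
  qed
  ultimately show ?thesis by simp
qed

lemma exp_convex_bound:
  fixes y l :: real
  assumes "0 \<le> y" "y \<le> 1" "l \<ge> 0"
  shows "exp (l * y) \<le> 1 + y * (exp l - 1)"
proof -
  have "exp (l * ((1 - y) *\<^sub>R 0 + y *\<^sub>R 1)) \<le> (1 - y) * exp (l * 0) + y * exp (l * 1)"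
    using convex_onD[OF convex_on_exp[OF assms(3)], of y 0 1] assms by simp
  then show ?thesis by (simp add: algebra_simps)
qed

lemma chernoff_prod:
  fixes I :: "'i set" and Q :: "'i \<Rightarrow> 'a measure" and g :: "'i \<Rightarrow> 'a \<Rightarrow> real"
  assumes fin: "finite I" and ps: "\<And>k. prob_space (Q k)"
    and meas: "\<And>k. k \<in> I \<Longrightarrow> g k \<in> borel_measurable (Q k)"
    and bnd: "\<And>k z. k \<in> I \<Longrightarrow> 0 \<le> g k z \<and> g k z \<le> 1" and lam: "l \<ge> 0"
  shows "measure (PiM I Q) {x\<in>space (PiM I Q). c \<le> (\<Sum>k\<in>I. g k (x k))}
     \<le> exp (-l*c) * (\<Prod>k\<in>I. 1 + (\<integral>z. g k z \<partial>Q k) * (exp l - 1))"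
proof -
  interpret product_sigma_finite Q
    unfolding product_sigma_finite_def using ps prob_space_imp_sigma_finite by blast
  interpret P: prob_space "PiM I Q" by (rule prob_space_PiM) (use ps in auto)
  let ?S = "{x\<in>space (PiM I Q). c \<le> (\<Sum>k\<in>I. g k (x k))}"
  have gm: "(\<lambda>x. g k (x k)) \<in> borel_measurable (PiM I Q)" if "k \<in> I" for k
    using measurable_comp[OF measurable_component_singleton[OF that, of Q] meas[OF that]] by (simp add: comp_def)
  have sm[measurable]: "(\<lambda>x. \<Sum>k\<in>I. g k (x k)) \<in> borel_measurable (PiM I Q)"
    by (intro borel_measurable_sum) (rule gm)
  have Sm: "?S \<in> sets (PiM I Q)" by measurable
  define H where "H x = exp (l * ((\<Sum>k\<in>I. g k (x k)) - c))" for x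
  have Hm: "H \<in> borel_measurable (PiM I Q)" unfolding H_def by measurable
  have Hb: "norm (H x) \<le> exp (l * (real (card I) - c))" for x
  proof -
    have "(\<Sum>k\<in>I. g k (x k)) \<le> (\<Sum>k\<in>I. 1)" by (intro sum_mono) (use bnd in auto)
    then have "l * ((\<Sum>k\<in>I. g k (x k)) - c) \<le> l * (real (card I) - c)"
      using lam by (intro mult_left_mono) auto
    then show ?thesis unfolding H_def by simp
  qed
  have Hi: "integrable (PiM I Q) H"
    by (rule P.integrable_const_bound[where B="exp (l * (real (card I) - c))"]) (use Hb Hm in auto)
  have "measure (PiM I Q) ?S = (\<integral>x. indicator ?S x \<partial>PiM I Q)"
    by simp
  also have "\<dots> \<le> (\<integral>x. H x \<partial>PiM I Q)"
  proof (rule integral_mono)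
    show "integrable (PiM I Q) (indicator ?S :: _ \<Rightarrow> real)"
      using Sm by (intro integrable_real_indicator) (auto simp: P.emeasure_eq_measure)
    show "integrable (PiM I Q) H" by (rule Hi)
    fix x assume "x \<in> space (PiM I Q)"
    show "indicator ?S x \<le> H x"
    proof (cases "x \<in> ?S")
      case True
      then have "0 \<le> l * ((\<Sum>k\<in>I. g k (x k)) - c)" using lam by simp
      then show ?thesis using True unfolding H_def by simp
    next
      case False then show ?thesis unfolding H_def by simp
    qed
  qed
  also have "(\<integral>x. H x \<partial>PiM I Q) = (\<integral>x. exp (-l*c) * (\<Prod>k\<in>I. exp (l * g k (x k))) \<partial>PiM I Q)"
  proof (rule Bochner_Integration.integral_cong[OF refl])
    fix x
    have "H x = exp (-l*c + (\<Sum>k\<in>I. l * g k (x k)))"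
      unfolding H_def by (simp add: sum_distrib_left[symmetric] algebra_simps)
    also have "\<dots> = exp (-l*c) * exp (\<Sum>k\<in>I. l * g k (x k))" by (rule exp_add)
    also have "exp (\<Sum>k\<in>I. l * g k (x k)) = (\<Prod>k\<in>I. exp (l * g k (x k)))" by (rule exp_sum[OF fin])
    finally show "H x = exp (-l*c) * (\<Prod>k\<in>I. exp (l * g k (x k)))" .
  qed
  also have "\<dots> = exp (-l*c) * (\<integral>x. (\<Prod>k\<in>I. exp (l * g k (x k))) \<partial>PiM I Q)"
    by (rule integral_mult_right_zero)
  also have "(\<integral>x. (\<Prod>k\<in>I. exp (l * g k (x k))) \<partial>PiM I Q) = (\<Prod>k\<in>I. \<integral>z. exp (l * g k z) \<partial>Q k)"
  proof (rule product_integral_prod[OF fin])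
    fix k assume k: "k \<in> I"
    interpret Qk: prob_space "Q k" by (rule ps)
    show "integrable (Q k) (\<lambda>z. exp (l * g k z))"
    proof (rule Qk.integrable_const_bound[where B="exp l"])
      show "AE z in Q k. norm (exp (l * g k z)) \<le> exp l"
        using bnd[OF k] lam by (auto intro!: mult_left_le)
      show "(\<lambda>z. exp (l * g k z)) \<in> borel_measurable (Q k)" using meas[OF k] by measurable
    qed
  qed
  also have "exp (-l*c) * (\<Prod>k\<in>I. \<integral>z. exp (l * g k z) \<partial>Q k)
      \<le> exp (-l*c) * (\<Prod>k\<in>I. 1 + (\<integral>z. g k z \<partial>Q k) * (exp l - 1))"
  proof (intro mult_left_mono prod_mono conjI)
    fix k assume k: "k \<in> I"
    interpret Qk: prob_space "Q k" by (rule ps)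
    have i1: "integrable (Q k) (\<lambda>z. exp (l * g k z))"
    proof (rule Qk.integrable_const_bound[where B="exp l"])
      show "AE z in Q k. norm (exp (l * g k z)) \<le> exp l"
        using bnd[OF k] lam by (auto intro!: mult_left_le)
      show "(\<lambda>z. exp (l * g k z)) \<in> borel_measurable (Q k)" using meas[OF k] by measurable
    qed
    have i2: "integrable (Q k) (g k)"
      by (rule Qk.integrable_const_bound[where B=1]) (use bnd[OF k] meas[OF k] in auto)
    show "0 \<le> (\<integral>z. exp (l * g k z) \<partial>Q k)" by (rule Bochner_Integration.integral_nonneg) simp
    have "(\<integral>z. exp (l * g k z) \<partial>Q k) \<le> (\<integral>z. 1 + g k z * (exp l - 1) \<partial>Q k)"
    proof (rule Bochner_Integration.integral_mono[OF i1])
      show "integrable (Q k) (\<lambda>z. 1 + g k z * (exp l - 1))"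
        using i2 by (intro Bochner_Integration.integrable_add integrable_mult_left) auto
      fix z
      show "exp (l * g k z) \<le> 1 + g k z * (exp l - 1)"
        using bnd[OF k, of z] lam by (intro exp_convex_bound) auto
    qed
    also have "\<dots> = 1 + (\<integral>z. g k z \<partial>Q k) * (exp l - 1)"
      using i2 by (simp add: Qk.prob_space)
    finally show "(\<integral>z. exp (l * g k z) \<partial>Q k) \<le> 1 + (\<integral>z. g k z \<partial>Q k) * (exp l - 1)" .
  qed simp
  finally show ?thesis .
qed


lemma prod_le_mean_pow:
  fixes a :: "'i \<Rightarrow> real"
  assumes fin: "finite I" and ne: "I \<noteq> {}" and pos: "\<And>k. k \<in> I \<Longrightarrow> a k > 0"
  shows "(\<Prod>k\<in>I. a k) \<le> ((\<Sum>k\<in>I. a k) / card I) ^ card I"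
proof -
  have N: "card I > 0" using fin ne by (simp add: card_gt_0_iff)
  have "(\<Sum>k\<in>I. (1 / card I) * ln (a k)) \<le> ln (\<Sum>k\<in>I. (1 / card I) *\<^sub>R a k)"
    by (rule concave_on_sum[OF fin ne ln_concave]) (use N pos in auto)
  then have "(\<Sum>k\<in>I. ln (a k)) \<le> card I * ln ((\<Sum>k\<in>I. a k) / card I)"
    using N by (simp add: sum_distrib_left[symmetric] sum_divide_distrib[symmetric] field_simps)
  moreover have avg: "(\<Sum>k\<in>I. a k) / card I > 0"
    using N pos fin ne by (intro divide_pos_pos sum_pos) auto
  ultimately have "exp (\<Sum>k\<in>I. ln (a k)) \<le> exp (ln (((\<Sum>k\<in>I. a k) / card I) ^ card I))"
    by (simp add: ln_realpow)
  then show ?thesis using avg pos by (simp add: exp_sum[OF fin])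
qed

definition klr :: "real \<Rightarrow> real \<Rightarrow> real" where
  "klr q p = q * ln (q / p) + (1 - q) * ln ((1 - q) / (1 - p))"

lemma kl_klr: "0 < p \<Longrightarrow> p < 1 \<Longrightarrow> kl q p = ereal (klr q p)"
  unfolding kl_def xlogxy_def klr_def by auto

lemma klr_self: "klr p p = 0" unfolding klr_def by simp

lemma klr_cont:
  assumes R: "0 < R" "R < 1"
  shows "continuous_on {R..1} (\<lambda>q. klr q R)"
  unfolding continuous_on_eq_continuous_within
proof
  fix x assume x: "x \<in> {R..1}"
  show "continuous (at x within {R..1}) (\<lambda>q. klr q R)"
  proof (cases "x = 1")
    case True
    have "((\<lambda>q. q * ln (q / R) + (1 - q) * ln ((1 - q) / (1 - R))) \<longlongrightarrow> 1 * ln (1 / R) + 0) (at_left 1)"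
    proof (rule tendsto_add)
      show "((\<lambda>q. q * ln (q / R)) \<longlongrightarrow> 1 * ln (1 / R)) (at_left 1)"
        using R by (intro tendsto_intros) auto
      have "((\<lambda>q. (1 - q) * ln (1 - q) - (1 - q) * ln (1 - R)) \<longlongrightarrow> 0) (at_left (1::real))"
        by real_asymp
      moreover have "eventually (\<lambda>q. (1 - q) * ln (1 - q) - (1 - q) * ln (1 - R) = (1 - q) * ln ((1 - q) / (1 - R))) (at_left (1::real))"
        using eventually_at_left_real[of "0::real" 1, OF zero_less_one]
        by eventually_elim (use R in \<open>simp add: ln_div algebra_simps\<close>)
      ultimately show "((\<lambda>q. (1 - q) * ln ((1 - q) / (1 - R))) \<longlongrightarrow> 0) (at_left 1)"
        by (rule Lim_transform_eventually)
    qed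
    then show ?thesis using True R
      by (simp add: continuous_within at_within_Icc_at_left klr_def)
  next
    case False
    with x have "0 < x" "x < 1" using R by auto
    then have "isCont (\<lambda>q. klr q R) x" unfolding klr_def using R
      by (intro continuous_intros) auto
    then show ?thesis by (rule continuous_at_imp_continuous_at_within)
  qed
qed

lemma klr_deriv:
  assumes "0 < R" "R < 1" "0 < x" "x < 1"
  shows "((\<lambda>q. klr q R) has_real_derivative (ln (x / R) - ln ((1 - x) / (1 - R)))) (at x)"
proof -
  have d1: "((\<lambda>z. z * ln (z / R)) has_real_derivative (ln (x / R) + 1)) (at x)"
    using assms by (auto intro!: derivative_eq_intros simp: field_simps)
  have nz: "1 - x \<noteq> 0" "1 - R \<noteq> 0" using assms by auto
  have d2: "((\<lambda>z. (1 - z) * ln ((1 - z) / (1 - R))) has_real_derivative (- ln ((1 - x) / (1 - R)) - 1)) (at x)"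
  proof -
    have l0: "((\<lambda>z. 1 - z) has_real_derivative (-1)) (at x)"
      by (auto intro!: derivative_eq_intros)
    have u: "((\<lambda>z. (1 - z) / (1 - R)) has_real_derivative (-1 / (1 - R))) (at x)"
      by (rule DERIV_cdivide[OF l0])
    have h0: "((\<lambda>z. ln ((1 - z) / (1 - R))) has_real_derivative (inverse ((1 - x) / (1 - R)) * (-1 / (1 - R)))) (at x)"
      by (rule DERIV_chain2[OF DERIV_ln u]) (use assms in simp)
    have "inverse ((1 - x) / (1 - R)) * (-1 / (1 - R)) = -1 / (1 - x)"
      using nz by (simp add: field_simps)
    with h0 have h: "((\<lambda>z. ln ((1 - z) / (1 - R))) has_real_derivative (-1 / (1 - x))) (at x)" by simp
    have l: "((\<lambda>z. 1 - z) has_real_derivative (-1)) (at x)"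
      by (auto intro!: derivative_eq_intros)
    have "((\<lambda>z. (1 - z) * ln ((1 - z) / (1 - R))) has_real_derivative
       ((-1) * ln ((1 - x) / (1 - R)) + (-1 / (1 - x)) * (1 - x))) (at x)"
      by (rule DERIV_mult[OF l h])
    moreover have "(-1) * ln ((1 - x) / (1 - R)) + (-1 / (1 - x)) * (1 - x) = - ln ((1 - x) / (1 - R)) - 1"
      using nz by simp
    ultimately show ?thesis by simp
  qed
  have "((\<lambda>q. q * ln (q / R) + (1 - q) * ln ((1 - q) / (1 - R))) has_real_derivative
     ((ln (x / R) + 1) + (- ln ((1 - x) / (1 - R)) - 1))) (at x)"
    by (rule DERIV_add[OF d1 d2])
  then show ?thesis unfolding klr_def by simp
qed

lemma klr_mono:
  assumes R: "0 < R" "R < 1" and q: "R \<le> q1" "q1 \<le> q2" "q2 \<le> 1"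
  shows "klr q1 R \<le> klr q2 R"
proof (rule DERIV_nonneg_imp_increasing_open[OF q(2)])
  fix x assume x: "q1 < x" "x < q2"
  then have "0 < x" "x < 1" "R \<le> x" using R q by auto
  have a: "ln ((1 - x) / (1 - R)) \<le> 0" using \<open>x < 1\<close> \<open>R \<le> x\<close> R by (simp add: ln_le_zero_iff)
  have b: "ln (x / R) \<ge> 0" using \<open>R \<le> x\<close> R by simp
  have d: "0 \<le> ln (x / R) - ln ((1 - x) / (1 - R))" using a b by linarith
  show "\<exists>y. ((\<lambda>q. klr q R) has_real_derivative y) (at x) \<and> 0 \<le> y"
    using klr_deriv[OF R \<open>0 < x\<close> \<open>x < 1\<close>] d by blast
next
  show "continuous_on {q1..q2} (\<lambda>q. klr q R)"
    by (rule continuous_on_subset[OF klr_cont[OF R]]) (use q in auto)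
qed



lemma chernoff_kl:
  fixes I :: "'i set" and Q :: "'i \<Rightarrow> 'a measure" and g :: "'i \<Rightarrow> 'a \<Rightarrow> real"
  assumes fin: "finite I" and ne: "I \<noteq> {}" and ps: "\<And>k. prob_space (Q k)"
    and meas: "\<And>k. k \<in> I \<Longrightarrow> g k \<in> borel_measurable (Q k)"
    and bnd: "\<And>k z. k \<in> I \<Longrightarrow> 0 \<le> g k z \<and> g k z \<le> 1"
    and R: "R = (\<Sum>k\<in>I. \<integral>z. g k z \<partial>Q k) / card I"
    and q: "R < q" "q < 1" "0 < R"
  shows "measure (PiM I Q) {x\<in>space (PiM I Q). q \<le> (\<Sum>k\<in>I. g k (x k)) / card I}
     \<le> exp (- real (card I) * klr q R)"
proof -
  define N where "N = card I"
  have N: "N > 0" using fin ne by (simp add: N_def card_gt_0_iff)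
  define \<mu> where "\<mu> k = (\<integral>z. g k z \<partial>Q k)" for k
  have \<mu>0: "\<mu> k \<ge> 0" if "k \<in> I" for k
    unfolding \<mu>_def by (rule Bochner_Integration.integral_nonneg) (use bnd[OF that] in auto)
  have sumR: "(\<Sum>k\<in>I. \<mu> k) = N * R" using R N by (simp add: \<mu>_def N_def)
  define l where "l = ln (q * (1 - R) / (R * (1 - q)))"
  have pos: "q * (1 - R) / (R * (1 - q)) > 0" using q by (intro divide_pos_pos mult_pos_pos) auto
  have el: "exp l = q * (1 - R) / (R * (1 - q))" unfolding l_def using pos by simp
  have ge1: "q * (1 - R) / (R * (1 - q)) \<ge> 1"
  proof -
    have "R * (1 - q) \<le> q * (1 - R)" using q by (simp add: algebra_simps)
    then show ?thesis using q by (simp add: field_simps)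
  qed
  have l0: "l \<ge> 0" unfolding l_def using ge1 by simp
  define a where "a = exp l - 1"
  have a0: "a \<ge> 0" unfolding a_def using l0 by simp
  have set_eq: "{x\<in>space (PiM I Q). q \<le> (\<Sum>k\<in>I. g k (x k)) / card I}
      = {x\<in>space (PiM I Q). N * q \<le> (\<Sum>k\<in>I. g k (x k))}"
    using N by (auto simp: N_def field_simps)
  have "measure (PiM I Q) {x\<in>space (PiM I Q). N * q \<le> (\<Sum>k\<in>I. g k (x k))}
      \<le> exp (-l * (N * q)) * (\<Prod>k\<in>I. 1 + \<mu> k * a)"
    unfolding \<mu>_def a_def by (rule chernoff_prod[OF fin ps meas bnd l0])
  also have "(\<Prod>k\<in>I. 1 + \<mu> k * a) \<le> ((\<Sum>k\<in>I. 1 + \<mu> k * a) / N) ^ N"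
    unfolding N_def
    by (rule prod_le_mean_pow[OF fin ne]) (use \<mu>0 a0 in \<open>auto intro: add_pos_nonneg\<close>)
  also have "(\<Sum>k\<in>I. 1 + \<mu> k * a) / N = 1 + R * a"
  proof -
    have "(\<Sum>k\<in>I. 1 + \<mu> k * a) = N + (\<Sum>k\<in>I. \<mu> k) * a"
      by (simp add: sum.distrib sum_distrib_right N_def)
    then show ?thesis using N by (simp add: sumR field_simps)
  qed
  also have "1 + R * a = (1 - R) / (1 - q)"
    unfolding a_def el using q by (simp add: field_simps)
  finally have bound: "measure (PiM I Q) {x\<in>space (PiM I Q). N * q \<le> (\<Sum>k\<in>I. g k (x k))}
      \<le> exp (-l * (N * q)) * ((1 - R) / (1 - q)) ^ N"
    by (simp add: mult_left_mono)
  have "((1 - R) / (1 - q)) ^ N = exp (N * ln ((1 - R) / (1 - q)))"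
    using q by (simp add: exp_of_nat_mult)
  then have "exp (-l * (N * q)) * ((1 - R) / (1 - q)) ^ N = exp (N * (- l * q + ln ((1 - R) / (1 - q))))"
    by (simp add: exp_add[symmetric] algebra_simps)
  also have "- l * q + ln ((1 - R) / (1 - q)) = - klr q R"
  proof -
    have lq: "l = ln q + ln (1 - R) - (ln R + ln (1 - q))"
      unfolding l_def using q by (simp add: ln_div ln_mult)
    have k: "klr q R = q * (ln q - ln R) + (1 - q) * (ln (1 - q) - ln (1 - R))"
      unfolding klr_def using q by (simp add: ln_div)
    show ?thesis unfolding lq k using q by (simp add: ln_div algebra_simps)
  qed
  finally show ?thesis using bound set_eq by (simp add: N_def)
qed

lemma upper_tail:
  fixes I :: "'i set" and Q :: "'i \<Rightarrow> 'a measure" and g :: "'i \<Rightarrow> 'a \<Rightarrow> real"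
  assumes fin: "finite I" and ne: "I \<noteq> {}" and ps: "\<And>k. prob_space (Q k)"
    and meas: "\<And>k. k \<in> I \<Longrightarrow> g k \<in> borel_measurable (Q k)"
    and bnd: "\<And>k z. k \<in> I \<Longrightarrow> 0 \<le> g k z \<and> g k z \<le> 1"
    and R: "R = (\<Sum>k\<in>I. \<integral>z. g k z \<partial>Q k) / card I"
    and eps: "\<epsilon> > 0"
  shows "\<exists>B\<in>sets (PiM I Q).
     {x\<in>space (PiM I Q). R \<le> (\<Sum>k\<in>I. g k (x k)) / card I \<and> kl ((\<Sum>k\<in>I. g k (x k)) / card I) R > ereal \<epsilon>} \<subseteq> B
     \<and> measure (PiM I Q) B \<le> exp (- real (card I) * \<epsilon>)"
proof -
  interpret P: prob_space "PiM I Q" by (rule prob_space_PiM) (use ps in auto)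
  define N where "N = card I"
  have N: "N > 0" using fin ne by (simp add: N_def card_gt_0_iff)
  define S where "S x = (\<Sum>k\<in>I. g k (x k))" for x
  have gm: "(\<lambda>x. g k (x k)) \<in> borel_measurable (PiM I Q)" if "k \<in> I" for k
    using measurable_comp[OF measurable_component_singleton[OF that, of Q] meas[OF that]] by (simp add: comp_def)
  have Sm[measurable]: "S \<in> borel_measurable (PiM I Q)"
    unfolding S_def by (intro borel_measurable_sum) (rule gm)
  have S0: "0 \<le> S x" for x unfolding S_def by (intro sum_nonneg) (use bnd in auto)
  have S1: "S x / N \<le> 1" for x
  proof -
    have "S x \<le> (\<Sum>k\<in>I. 1)" unfolding S_def by (intro sum_mono) (use bnd in auto)
    then show ?thesis using N by (simp add: N_def)
  qed
  have \<mu>0: "(\<integral>z. g k z \<partial>Q k) \<ge> 0" if "k \<in> I" for k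
    by (rule Bochner_Integration.integral_nonneg) (use bnd[OF that] in auto)
  have \<mu>1: "(\<integral>z. g k z \<partial>Q k) \<le> 1" if "k \<in> I" for k
  proof -
    interpret Qk: prob_space "Q k" by (rule ps)
    have "(\<integral>z. g k z \<partial>Q k) \<le> (\<integral>z. 1 \<partial>Q k)"
      by (rule Bochner_Integration.integral_mono)
        (use bnd[OF that] meas[OF that] in \<open>auto intro!: Qk.integrable_const_bound[where B=1]\<close>)
    then show ?thesis by (simp add: Qk.prob_space)
  qed
  have R0: "0 \<le> R" unfolding R using \<mu>0 by (auto intro!: divide_nonneg_nonneg sum_nonneg)
  have R1: "R \<le> 1"
  proof -
    have "(\<Sum>k\<in>I. \<integral>z. g k z \<partial>Q k) \<le> (\<Sum>k\<in>I. 1)" by (intro sum_mono) (use \<mu>1 in auto)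
    then show ?thesis unfolding R using N by (simp add: N_def)
  qed
  let ?bad = "{x\<in>space (PiM I Q). R \<le> S x / N \<and> kl (S x / N) R > ereal \<epsilon>}"
  have goal: "\<exists>B\<in>sets (PiM I Q). ?bad \<subseteq> B \<and> measure (PiM I Q) B \<le> exp (- real N * \<epsilon>)"
  proof (cases "R = 1")
    case True
    have "?bad = {}"
    proof -
      have "kl (S x / N) R = 0" if "R \<le> S x / N" for x
      proof -
        have "S x / N = 1" using S1[of x] that True by linarith
        then show ?thesis using True by (simp add: kl_def xlogxy_def)
      qed
      then show ?thesis using eps by fastforce
    qed
    then show ?thesis by (intro bexI[of _ "{}"]) auto
  next
    case R_ne1: False
    show ?thesis
    proof (cases "R = 0")
      case True
      define B where "B = {x\<in>space (PiM I Q). S x \<noteq> 0}"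
      have Bm: "B \<in> sets (PiM I Q)" unfolding B_def by measurable
      have int_comp: "(\<integral>x. g k (x k) \<partial>PiM I Q) = (\<integral>z. g k z \<partial>Q k)" if "k \<in> I" for k
      proof -
        have "(\<integral>z. g k z \<partial>Q k) = (\<integral>z. g k z \<partial>distr (PiM I Q) (Q k) (\<lambda>x. x k))"
          by (subst distr_PiM_component) (use ps that in auto)
        also have "\<dots> = (\<integral>x. g k (x k) \<partial>PiM I Q)"
          by (rule integral_distr) (use that meas in auto)
        finally show ?thesis by simp
      qed
      have intg: "integrable (PiM I Q) (\<lambda>x. g k (x k))" if "k \<in> I" for k
        by (rule P.integrable_const_bound[where B=1]) (use bnd[OF that] gm[OF that] in auto)
      have "(\<integral>x. S x \<partial>PiM I Q) = (\<Sum>k\<in>I. \<integral>z. g k z \<partial>Q k)"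
        unfolding S_def by (subst Bochner_Integration.integral_sum) (use intg int_comp in auto)
      also have "\<dots> = 0" using True R N by (simp add: N_def)
      finally have "(\<integral>x. S x \<partial>PiM I Q) = 0" .
      moreover have "integrable (PiM I Q) S"
        unfolding S_def using intg by auto
      ultimately have "AE x in PiM I Q. S x = 0"
        using integral_nonneg_eq_0_iff_AE[of "PiM I Q" S] S0 by auto
      then have "emeasure (PiM I Q) B = 0"
        using AE_iff_measurable[OF Bm, of "\<lambda>x. S x = 0"] by (simp add: B_def)
      then have mB: "measure (PiM I Q) B = 0" by (simp add: measure_def)
      have "?bad \<subseteq> B"
      proof
        fix x assume x: "x \<in> ?bad"
        have "S x \<noteq> 0"
        proof
          assume "S x = 0"
          then have "kl (S x / N) R = 0" using True by (simp add: kl_def xlogxy_def)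
          then show False using x eps by auto
        qed
        then show "x \<in> B" using x by (simp add: B_def)
      qed
      then show ?thesis using Bm mB by (intro bexI[of _ B]) auto
    next
      case R_ne0: False
      have Rp: "0 < R" "R < 1" using R0 R1 R_ne0 R_ne1 by auto
      show ?thesis
      proof (cases "klr 1 R \<le> \<epsilon>")
        case True
        have "?bad = {}"
        proof -
          have "klr (S x / N) R \<le> \<epsilon>" if "R \<le> S x / N" for x
            using klr_mono[OF Rp that S1[of x]] True by simp
          then show ?thesis using kl_klr[OF Rp] by (auto simp del: klr_def) (meson not_le)
        qed
        then show ?thesis by (intro bexI[of _ "{}"]) auto
      next
        case False
        obtain q0 where q0: "R \<le> q0" "q0 \<le> 1" "klr q0 R = \<epsilon>"
          using IVT'[of "\<lambda>q. klr q R" R \<epsilon> 1] klr_cont[OF Rp] klr_self[of R] False eps Rp by auto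
        have q0R: "R < q0" using q0 klr_self[of R] eps by (cases "q0 = R") auto
        have q01: "q0 < 1" using q0 False by (cases "q0 = 1") auto
        define B where "B = {x\<in>space (PiM I Q). q0 \<le> S x / N}"
        have Bm: "B \<in> sets (PiM I Q)" unfolding B_def by measurable
        have "measure (PiM I Q) B \<le> exp (- real (card I) * klr q0 R)"
          unfolding B_def S_def N_def by (rule chernoff_kl[OF fin ne ps meas bnd R q0R q01 Rp(1)])
        then have mB: "measure (PiM I Q) B \<le> exp (- real N * \<epsilon>)" using q0 by (simp add: N_def)
        have "?bad \<subseteq> B"
        proof
          fix x assume x: "x \<in> ?bad"
          have "q0 \<le> S x / N"
          proof (rule ccontr)
            assume "\<not> q0 \<le> S x / N"
            then have "klr (S x / N) R \<le> klr q0 R"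
              using x klr_mono[OF Rp, of "S x / N" q0] q0 by auto
            then show False using x q0 kl_klr[OF Rp] by auto
          qed
          then show "x \<in> B" using x by (simp add: B_def)
        qed
        then show ?thesis using Bm mB by (intro bexI[of _ B]) auto
      qed
    qed
  qed
  then show ?thesis unfolding S_def N_def .
qed

lemma tail_bound:
  fixes I :: "'i set" and Q :: "'i \<Rightarrow> 'a measure" and g :: "'i \<Rightarrow> 'a \<Rightarrow> real"
  assumes fin: "finite I" and ne: "I \<noteq> {}" and ps: "\<And>k. prob_space (Q k)"
    and meas: "\<And>k. k \<in> I \<Longrightarrow> g k \<in> borel_measurable (Q k)"
    and bnd: "\<And>k z. k \<in> I \<Longrightarrow> 0 \<le> g k z \<and> g k z \<le> 1"
    and R: "R = (\<Sum>k\<in>I. \<integral>z. g k z \<partial>Q k) / card I"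
    and eps: "\<epsilon> > 0"
  shows "\<exists>B\<in>sets (PiM I Q).
     {x\<in>space (PiM I Q). kl ((\<Sum>k\<in>I. g k (x k)) / card I) R > ereal \<epsilon>} \<subseteq> B
     \<and> measure (PiM I Q) B \<le> 2 * exp (- real (card I) * \<epsilon>)"
proof -
  have N: "card I > 0" using fin ne by (simp add: card_gt_0_iff)
  obtain B1 where B1: "B1 \<in> sets (PiM I Q)"
    "{x\<in>space (PiM I Q). R \<le> (\<Sum>k\<in>I. g k (x k)) / card I \<and> kl ((\<Sum>k\<in>I. g k (x k)) / card I) R > ereal \<epsilon>} \<subseteq> B1"
    "measure (PiM I Q) B1 \<le> exp (- real (card I) * \<epsilon>)"
    using upper_tail[OF fin ne ps meas bnd R eps] by blast
  define g' where "g' k z = 1 - g k z" for k z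
  have meas': "g' k \<in> borel_measurable (Q k)" if "k \<in> I" for k
    unfolding g'_def using meas[OF that] by measurable
  have bnd': "0 \<le> g' k z \<and> g' k z \<le> 1" if "k \<in> I" for k z
    unfolding g'_def using bnd[OF that, of z] by auto
  have int': "(\<integral>z. g' k z \<partial>Q k) = 1 - (\<integral>z. g k z \<partial>Q k)" if "k \<in> I" for k
  proof -
    interpret Qk: prob_space "Q k" by (rule ps)
    have "integrable (Q k) (g k)"
      by (rule Qk.integrable_const_bound[where B=1]) (use bnd[OF that] meas[OF that] in auto)
    then show ?thesis unfolding g'_def
      by (subst Bochner_Integration.integral_diff) (auto simp: Qk.prob_space)
  qed
  have R': "1 - R = (\<Sum>k\<in>I. \<integral>z. g' k z \<partial>Q k) / card I"
    using N unfolding R by (simp add: int' sum_subtractf field_simps)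
  obtain B2 where B2: "B2 \<in> sets (PiM I Q)"
    "{x\<in>space (PiM I Q). 1 - R \<le> (\<Sum>k\<in>I. g' k (x k)) / card I \<and> kl ((\<Sum>k\<in>I. g' k (x k)) / card I) (1 - R) > ereal \<epsilon>} \<subseteq> B2"
    "measure (PiM I Q) B2 \<le> exp (- real (card I) * \<epsilon>)"
    using upper_tail[OF fin ne ps meas' bnd' R' eps] by blast
  have h': "(\<Sum>k\<in>I. g' k (x k)) / card I = 1 - (\<Sum>k\<in>I. g k (x k)) / card I" for x
    using N unfolding g'_def by (simp add: sum_subtractf field_simps)
  have klsym: "kl (1 - a) (1 - b) = kl a b" for a b
    unfolding kl_def by (simp add: add.commute)
  have "{x\<in>space (PiM I Q). kl ((\<Sum>k\<in>I. g k (x k)) / card I) R > ereal \<epsilon>} \<subseteq> B1 \<union> B2"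
  proof
    fix x assume x: "x \<in> {x\<in>space (PiM I Q). kl ((\<Sum>k\<in>I. g k (x k)) / card I) R > ereal \<epsilon>}"
    show "x \<in> B1 \<union> B2"
    proof (cases "R \<le> (\<Sum>k\<in>I. g k (x k)) / card I")
      case True then show ?thesis using x B1(2) by blast
    next
      case False
      then have "1 - R \<le> (\<Sum>k\<in>I. g' k (x k)) / card I" unfolding h' by simp
      moreover have "kl ((\<Sum>k\<in>I. g' k (x k)) / card I) (1 - R) > ereal \<epsilon>"
        unfolding h' klsym using x by simp
      ultimately show ?thesis using x B2(2) by blast
    qed
  qed
  moreover have "measure (PiM I Q) (B1 \<union> B2) \<le> 2 * exp (- real (card I) * \<epsilon>)"
    using measure_Un_le[OF B1(1) B2(1)] B1(3) B2(3) by simp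
  ultimately show ?thesis using B1(1) B2(1) by (intro bexI[of _ "B1 \<union> B2"]) auto
qed



lemma pf_inj: "prefix_free_encoding C Z \<Longrightarrow> inj_on C Z"
  unfolding prefix_free_encoding_def inj_on_def by fastforce

lemma pair_kraft:
  assumes hl: "is_prefix_code_length l E" and hL: "\<forall>e\<in>E. is_prefix_code_length (L e) T"
    and fin: "finite S" and sub: "S \<subseteq> E \<times> T"
  shows "(\<Sum>x\<in>S. (1/2::real) ^ (l (fst x) + L (fst x) (snd x))) \<le> 1"
proof -
  obtain C where C: "prefix_free_encoding C E" "\<forall>e\<in>E. l e = length (C e)"
    using hl unfolding is_prefix_code_length_def by blast
  obtain CC where CC: "\<forall>e\<in>E. prefix_free_encoding (CC e) T \<and> (\<forall>t\<in>T. L e t = length (CC e t))"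
    using hL unfolding is_prefix_code_length_def by metis
  define D where "D x = C (fst x) @ CC (fst x) (snd x)" for x
  have pf: "prefix_free_encoding D (E \<times> T)"
    unfolding prefix_free_encoding_def
  proof (intro ballI impI notI)
    fix x y assume x: "x \<in> E \<times> T" and y: "y \<in> E \<times> T" and ne: "x \<noteq> y" and pre: "prefix (D x) (D y)"
    have "prefix (C (fst x)) (D y)" using pre unfolding D_def
      using prefix_order.trans by (metis prefixI)
    moreover have "prefix (C (fst y)) (D y)" unfolding D_def by simp
    ultimately have "prefix (C (fst x)) (C (fst y)) \<or> prefix (C (fst y)) (C (fst x))"
      by (rule prefix_same_cases)
    moreover have "fst x \<in> E" "fst y \<in> E" using x y by auto
    ultimately have e: "fst x = fst y"
    proof -
      assume cmp: "prefix (C (fst x)) (C (fst y)) \<or> prefix (C (fst y)) (C (fst x))"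
        and ex: "fst x \<in> E" and ey: "fst y \<in> E"
      show ?thesis
      proof (rule ccontr)
        assume "fst x \<noteq> fst y"
        then have "\<not> prefix (C (fst x)) (C (fst y))" "\<not> prefix (C (fst y)) (C (fst x))"
          using C(1) ex ey unfolding prefix_free_encoding_def by auto
        then show False using cmp by blast
      qed
    qed
    then have "prefix (CC (fst x) (snd x)) (CC (fst x) (snd y))"
      using pre unfolding D_def by simp
    moreover have "snd x \<noteq> snd y" using ne e by (simp add: prod_eq_iff)
    ultimately show False using CC x y unfolding prefix_free_encoding_def by auto
  qed
  have "(\<Sum>x\<in>S. (1/2::real) ^ (l (fst x) + L (fst x) (snd x))) = (\<Sum>x\<in>S. (1/2::real) ^ length (D x))"
  proof (rule sum.cong[OF refl])
    fix x assume "x \<in> S"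
    then have "fst x \<in> E" "snd x \<in> T" using sub by auto
    then show "(1/2::real) ^ (l (fst x) + L (fst x) (snd x)) = (1/2) ^ length (D x)"
      using C(2) CC unfolding D_def by simp
  qed
  also have "\<dots> \<le> 1" by (rule kraft_finite[OF pf fin sub])
  finally show ?thesis .
qed

lemma countable_union_bound:
  assumes P: "prob_space M" and cX: "countable X" and Bm: "\<And>x. x \<in> X \<Longrightarrow> B x \<in> sets M"
    and fs: "\<And>S. finite S \<Longrightarrow> S \<subseteq> X \<Longrightarrow> (\<Sum>x\<in>S. measure M (B x)) \<le> d"
  shows "measure M (\<Union>x\<in>X. B x) \<le> d"
proof (cases "X = {}")
  case True
  then show ?thesis using fs[of "{}"] by simp
next
  case False
  interpret prob_space M by (rule P)
  define e where "e = from_nat_into X"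
  have rX: "range e = X" unfolding e_def using False cX by simp
  define D where "D k = (\<Union>x\<in>e ` {..<k}. B x)" for k
  have Dm: "D k \<in> sets M" for k unfolding D_def using rX Bm
    by (intro sets.finite_UN) auto
  have inc: "incseq D" unfolding D_def incseq_def
  proof (intro allI impI)
    fix a b :: nat assume "a \<le> b"
    then have "e ` {..<a} \<subseteq> e ` {..<b}" by auto
    then show "(\<Union>x\<in>e ` {..<a}. B x) \<subseteq> (\<Union>x\<in>e ` {..<b}. B x)" by blast
  qed
  have U: "(\<Union>k. D k) = (\<Union>x\<in>X. B x)"
  proof
    show "(\<Union>k. D k) \<subseteq> (\<Union>x\<in>X. B x)" unfolding D_def using rX by auto
    show "(\<Union>x\<in>X. B x) \<subseteq> (\<Union>k. D k)"
    proof
      fix y assume "y \<in> (\<Union>x\<in>X. B x)"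
      then obtain x where x: "x \<in> X" "y \<in> B x" by auto
      then obtain k where "e k = x" using rX by auto
      then have "y \<in> D (Suc k)" unfolding D_def using x by auto
      then show "y \<in> (\<Union>k. D k)" by auto
    qed
  qed
  have lim: "(\<lambda>k. measure M (D k)) \<longlonglongrightarrow> measure M (\<Union>k. D k)"
    by (rule finite_Lim_measure_incseq) (use Dm inc in auto)
  have "measure M (D k) \<le> d" for k
  proof -
    have "measure M (D k) \<le> (\<Sum>x\<in>e ` {..<k}. measure M (B x))"
      unfolding D_def by (rule measure_UNION_le) (use rX Bm in auto)
    also have "\<dots> \<le> d" by (rule fs) (use rX in auto)
    finally show ?thesis .
  qed
  then have "measure M (\<Union>k. D k) \<le> d"
    by (intro LIMSEQ_le_const2[OF lim]) auto
  then show ?thesis using U by simp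
qed



lemma pf_mono: "T \<subseteq> Z \<Longrightarrow> prefix_free_encoding C Z \<Longrightarrow> prefix_free_encoding C T"
  unfolding prefix_free_encoding_def by (meson subsetD)

theorem theorem3:
  fixes F :: "('x \<Rightarrow> 'y) set"
    and n m :: nat
    and p :: "nat \<Rightarrow> ('x \<times> 'y) measure"
    and loss :: "nat \<Rightarrow> 'y \<Rightarrow> 'y \<Rightarrow> real"
    and \<E> :: "'e set"
    and l :: "'e \<Rightarrow> nat"
    and lE :: "'e \<Rightarrow> ('x \<Rightarrow> 'y) list \<Rightarrow> nat"
    and \<delta> :: real
  assumes "n \<ge> 1" and "m \<ge> 1"
    and "\<forall>i<n. prob_space (p i)"
    and "\<forall>i<n. \<forall>y y'. 0 \<le> loss i y y' \<and> loss i y y' \<le> 1"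
    and "\<forall>i<n. \<forall>f\<in>F. (\<lambda>z. loss i (snd z) (f (fst z))) \<in> borel_measurable (p i)"
    and "is_prefix_code_length l \<E>"
    and "\<forall>E\<in>\<E>. is_prefix_code_length (lE E) (tuples_of F)"
    and "\<delta> > 0"
  shows "\<exists>A \<in> sets (sample_measure n m p).
           measure (sample_measure n m p) A \<ge> 1 - \<delta> \<and>
           (\<forall>S\<in>A. \<forall>E\<in>\<E>. \<forall>f. (\<forall>i<n. f i \<in> F) \<longrightarrow>
              kl (mt_emp_risk n m loss S f) (mt_risk n p loss f)
                \<le> ereal (((real (l E) + real (lE E (map f [0..<n]))) * ln 2
                          + ln (2 * sqrt (real m * real n) / \<delta>)) / (real m * real n)))"
proof (cases "\<delta> \<ge> 1")
  case True
  then show ?thesis by (intro bexI[of _ "{}"]) auto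
next
  case False
  note n1 = assms(1) and m1 = assms(2) and ps0 = assms(3) and lb = assms(4) and lm = assms(5)
    and hl = assms(6) and hlE = assms(7) and d0 = assms(8)
  define M where "M = sample_measure n m p"
  define I where "I = {..<n} \<times> {..<m}"
  define Q where "Q k = (if fst k < n then p (fst k) else p 0)" for k :: "nat \<times> nat"
  have ps: "prob_space (Q k)" for k unfolding Q_def using ps0 n1 by auto
  have MI: "M = PiM I Q" unfolding M_def sample_measure_def I_def
    by (rule PiM_cong) (auto simp: Q_def)
  interpret P: prob_space M unfolding MI by (rule prob_space_PiM) (use ps in auto)
  have finI: "finite I" unfolding I_def by simp
  have neI: "I \<noteq> {}" unfolding I_def using n1 m1 by (auto simp: lessThan_empty_iff)
  have cardI: "real (card I) = real m * real n" unfolding I_def by (simp add: card_cartesian_product)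
  define T where "T = {t. length t = n \<and> set t \<subseteq> F}"
  define X where "X = \<E> \<times> T"
  define g where "g t k z = loss (fst k) (snd z) ((t ! fst k) (fst z))" for t :: "('x \<Rightarrow> 'y) list" and k :: "nat \<times> nat" and z
  define Rt where "Rt t = (\<Sum>k\<in>I. \<integral>z. g t k z \<partial>Q k) / card I" for t
  define eps where "eps E t = ((real (l E) + real (lE E t)) * ln 2 + ln (2 * sqrt (real m * real n) / \<delta>)) / (real m * real n)" for E t
  define bad where "bad x = {S\<in>space M. kl ((\<Sum>k\<in>I. g (snd x) k (S k)) / card I) (Rt (snd x)) > ereal (eps (fst x) (snd x))}" for x
  have mn1: "real m * real n \<ge> 1" using n1 m1
  proof -
    have "real m \<ge> 1" "real n \<ge> 1" using n1 m1 by simp_all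
    then show ?thesis using mult_mono[of 1 "real m" 1 "real n"] by simp
  qed
  have eps_pos: "eps E t > 0" for E t
  proof -
    have "2 * sqrt (real m * real n) / \<delta> > 1"
    proof -
      have "sqrt (real m * real n) \<ge> 1" using mn1 by simp
      then have "2 * sqrt (real m * real n) > \<delta>" using False by linarith
      then show ?thesis using d0 by simp
    qed
    then have "ln (2 * sqrt (real m * real n) / \<delta>) > 0" by simp
    moreover have "(real (l E) + real (lE E t)) * ln 2 \<ge> 0" by (intro mult_nonneg_nonneg) auto
    ultimately have "(real (l E) + real (lE E t)) * ln 2 + ln (2 * sqrt (real m * real n) / \<delta>) > 0" by linarith
    then show ?thesis unfolding eps_def using mn1 by (intro divide_pos_pos) auto
  qed
  have ex_bad: "\<exists>B. B \<in> sets M \<and> bad x \<subseteq> B \<and> measure M B \<le> 2 * exp (- (real m * real n) * eps (fst x) (snd x))"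
    if x: "x \<in> X" for x
  proof -
    obtain E t where xe: "x = (E, t)" by (cases x)
    have t: "length t = n" "set t \<subseteq> F" using x xe by (auto simp: X_def T_def)
    have meas: "g t k \<in> borel_measurable (Q k)" if "k \<in> I" for k
    proof -
      have "fst k < n" using that by (auto simp: I_def)
      then have "t ! fst k \<in> F" using t by auto
      then show ?thesis using lm \<open>fst k < n\<close> unfolding g_def Q_def by auto
    qed
    have bnd: "0 \<le> g t k z \<and> g t k z \<le> 1" if "k \<in> I" for k z
      using that lb unfolding g_def I_def by auto
    show ?thesis
    proof -
      obtain B where B: "B \<in> sets (PiM I Q)"
        "{S\<in>space (PiM I Q). kl ((\<Sum>k\<in>I. g t k (S k)) / card I) (Rt t) > ereal (eps E t)} \<subseteq> B"
        "measure (PiM I Q) B \<le> 2 * exp (- real (card I) * eps E t)"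
        using tail_bound[OF finI neI ps meas bnd Rt_def eps_pos[of E t]] by blast
      have "bad x \<subseteq> B" using B(2) unfolding xe bad_def MI by simp
      moreover have "measure M B \<le> 2 * exp (- (real m * real n) * eps (fst x) (snd x))"
        using B(3) unfolding xe MI cardI by simp
      ultimately show ?thesis using B(1) unfolding MI by blast
    qed
  qed
  define Bad where "Bad x = (SOME B. B \<in> sets M \<and> bad x \<subseteq> B \<and> measure M B \<le> 2 * exp (- (real m * real n) * eps (fst x) (snd x)))" for x
  have Bad: "Bad x \<in> sets M \<and> bad x \<subseteq> Bad x \<and> measure M (Bad x) \<le> 2 * exp (- (real m * real n) * eps (fst x) (snd x))"
    if "x \<in> X" for x
    unfolding Bad_def by (rule someI_ex[OF ex_bad[OF that]])
  have cX: "countable X"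
  proof (cases "\<E> = {}")
    case True then show ?thesis by (simp add: X_def)
  next
    case False
    then obtain E0 where E0: "E0 \<in> \<E>" by auto
    obtain C where C: "prefix_free_encoding C \<E>"
      using hl unfolding is_prefix_code_length_def by blast
    have cE: "countable \<E>"
      by (rule countable_image_inj_on[OF _ pf_inj[OF C]]) simp
    obtain C' where C': "prefix_free_encoding C' (tuples_of F)"
      using hlE E0 unfolding is_prefix_code_length_def by blast
    have cTF: "countable (tuples_of F)"
      by (rule countable_image_inj_on[OF _ pf_inj[OF C']]) simp
    have "T \<subseteq> tuples_of F" unfolding T_def tuples_of_def using n1 by auto
    then have "countable T" using cTF countable_subset by blast
    then show ?thesis unfolding X_def using cE by auto
  qed
  define U where "U = (\<Union>x\<in>X. Bad x)"
  have Um: "U \<in> sets M" unfolding U_def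
    by (rule sets.countable_UN'[OF cX]) (use Bad in auto)
  have weight: "measure M (Bad x) \<le> \<delta> * (1/2) ^ (l (fst x) + lE (fst x) (snd x))" if "x \<in> X" for x
  proof -
    define L where "L = l (fst x) + lE (fst x) (snd x)"
    define s where "s = sqrt (real m * real n)"
    have s1: "s \<ge> 1" unfolding s_def using mn1 by simp
    have "(real m * real n) * eps (fst x) (snd x) = real L * ln 2 + ln (2 * s / \<delta>)"
      unfolding eps_def L_def s_def using mn1 n1 m1 by simp
    then have "exp (- (real m * real n) * eps (fst x) (snd x)) = exp (- (real L * ln 2)) * exp (- ln (2 * s / \<delta>))"
      by (simp add: exp_add[symmetric])
    also have "exp (- (real L * ln 2)) = (1/2) ^ L"
      by (simp add: exp_minus exp_of_nat_mult power_one_over inverse_eq_divide)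
    also have "exp (- ln (2 * s / \<delta>)) = \<delta> / (2 * s)"
      using s1 d0 by (simp add: exp_minus)
    finally have "2 * exp (- (real m * real n) * eps (fst x) (snd x)) = \<delta> * (1/2) ^ L / s"
      using s1 by (simp add: field_simps)
    also have "\<dots> \<le> \<delta> * (1/2) ^ L"
    proof -
      have pos: "0 \<le> \<delta> * (1/2::real) ^ L" using d0 by simp
      have "\<delta> * (1/2) ^ L / s \<le> \<delta> * (1/2) ^ L / 1"
        by (rule divide_left_mono[OF _ pos]) (use s1 in auto)
      then show ?thesis by simp
    qed
    finally have "2 * exp (- (real m * real n) * eps (fst x) (snd x)) \<le> \<delta> * (1/2) ^ L" .
    moreover have "measure M (Bad x) \<le> 2 * exp (- (real m * real n) * eps (fst x) (snd x))"
      using Bad[OF that] by blast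
    ultimately show ?thesis unfolding L_def by linarith
  qed
  have Ule: "measure M U \<le> \<delta>"
    unfolding U_def
  proof (rule countable_union_bound[OF _ cX])
    show "prob_space M" by (rule P.prob_space_axioms)
    show "Bad x \<in> sets M" if "x \<in> X" for x using Bad[OF that] by simp
    fix S assume S: "finite S" "S \<subseteq> X"
    have "(\<Sum>x\<in>S. measure M (Bad x)) \<le> (\<Sum>x\<in>S. \<delta> * (1/2) ^ (l (fst x) + lE (fst x) (snd x)))"
      by (rule sum_mono) (use weight S in auto)
    also have "\<dots> = \<delta> * (\<Sum>x\<in>S. (1/2) ^ (l (fst x) + lE (fst x) (snd x)))"
      by (simp add: sum_distrib_left)
    also have "\<dots> \<le> \<delta> * 1"
    proof (rule mult_left_mono)
      have hlT: "\<forall>E\<in>\<E>. is_prefix_code_length (lE E) T"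
      proof
        fix E assume "E \<in> \<E>"
        then obtain C where C: "prefix_free_encoding C (tuples_of F)" "\<forall>z\<in>tuples_of F. lE E z = length (C z)"
          using hlE unfolding is_prefix_code_length_def by blast
        have "T \<subseteq> tuples_of F" unfolding T_def tuples_of_def using n1 by auto
        then have "prefix_free_encoding C T" using C(1) by (rule pf_mono)
        then show "is_prefix_code_length (lE E) T"
          unfolding is_prefix_code_length_def using C(2) \<open>T \<subseteq> tuples_of F\<close> by blast
      qed
      show "(\<Sum>x\<in>S. (1/2::real) ^ (l (fst x) + lE (fst x) (snd x))) \<le> 1"
        by (rule pair_kraft[OF hl hlT S(1)]) (use S(2) in \<open>simp add: X_def\<close>)
    qed (use d0 in simp)
    finally show "(\<Sum>x\<in>S. measure M (Bad x)) \<le> \<delta>" by simp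
  qed
  define A where "A = space M - U"
  have Am: "A \<in> sets M" unfolding A_def using Um by auto
  have mA: "measure M A \<ge> 1 - \<delta>"
    unfolding A_def using P.prob_compl[OF Um] Ule by simp
  have good: "kl (mt_emp_risk n m loss S f) (mt_risk n p loss f)
                \<le> ereal (((real (l E) + real (lE E (map f [0..<n]))) * ln 2
                          + ln (2 * sqrt (real m * real n) / \<delta>)) / (real m * real n))"
    if S: "S \<in> A" and E: "E \<in> \<E>" and f: "\<forall>i<n. f i \<in> F" for S E f
  proof -
    define t where "t = map f [0..<n]"
    have tT: "t \<in> T" unfolding T_def t_def using f by auto
    have xX: "(E, t) \<in> X" unfolding X_def using E tT by auto
    have tf: "t ! i = f i" if "i < n" for i unfolding t_def using that by simp
    have emp: "(\<Sum>k\<in>I. g t k (S k)) / card I = mt_emp_risk n m loss S f"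
    proof -
      have "(\<Sum>k\<in>I. g t k (S k)) = (\<Sum>(i,j)\<in>I. loss i (snd (S (i, j))) (f i (fst (S (i, j)))))"
        by (rule sum.cong) (auto simp: I_def g_def tf)
      also have "\<dots> = (\<Sum>i<n. \<Sum>j<m. loss i (snd (S (i, j))) (f i (fst (S (i, j)))))"
        unfolding I_def by (rule sum.cartesian_product[symmetric])
      finally have "(\<Sum>k\<in>I. g t k (S k)) = (\<Sum>i<n. \<Sum>j<m. loss i (snd (S (i, j))) (f i (fst (S (i, j)))))" .
      then show ?thesis unfolding mt_emp_risk_def cardI by simp
    qed
    have risk: "Rt t = mt_risk n p loss f"
    proof -
      have "(\<Sum>k\<in>I. \<integral>z. g t k z \<partial>Q k) = (\<Sum>(i,j)\<in>I. \<integral>z. loss i (snd z) (f i (fst z)) \<partial>p i)"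
        by (rule sum.cong) (auto simp: I_def g_def Q_def tf)
      also have "\<dots> = (\<Sum>i<n. \<Sum>j<m. \<integral>z. loss i (snd z) (f i (fst z)) \<partial>p i)"
        unfolding I_def by (rule sum.cartesian_product[symmetric])
      also have "\<dots> = real m * (\<Sum>i<n. \<integral>z. loss i (snd z) (f i (fst z)) \<partial>p i)"
        by (simp add: sum_distrib_left)
      finally show ?thesis unfolding Rt_def mt_risk_def cardI using m1 by simp
    qed
    have "S \<in> space M" "S \<notin> Bad (E, t)" using S xX unfolding A_def U_def by auto
    then have "S \<notin> bad (E, t)" using Bad[OF xX] by auto
    then have "\<not> kl (mt_emp_risk n m loss S f) (mt_risk n p loss f) > ereal (eps E t)"
      using \<open>S \<in> space M\<close> emp risk unfolding bad_def by simp
    then show ?thesis unfolding eps_def t_def by simp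
  qed
  show ?thesis unfolding M_def[symmetric] using Am mA good by blast
qed


end
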